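(* If $u,v:\mathbb{C}\to\mathbb{R}$ are harmonic and $f=u+iv$ is nonconstant, then $\mathcal{D}(f(\mathbb{C}))$ is a nonempty closed subset of $\partial\mathbb{D}$.
   Context: $\partial\mathbb{D}$ is the unit circle. For a set $\mathcal{R}\subset\mathbb{C}$, a point $e^{i\theta}\in\partial\mathbb{D}$ is an asymptotic direction of $\mathcal{R}$ if there exist points $w_n\in\mathcal{R}$ and positive numbers $\varepsilon_n\to 0$ with $\varepsilon_n w_n\to e^{i\theta}$; $\mathcal{D}(\mathcal{R})$ denotes the set of asymptotic directions of $\mathcal{R}$. *)

theory Defs
  imports "HOL-Analysis.Analysis"
begin

definition pdx :: "(complex \<Rightarrow> real) \<Rightarrow> complex \<Rightarrow> real" where
  "pdx u z = deriv (\<lambda>t::real. u (z + complex_of_real t)) 0"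

definition pdy :: "(complex \<Rightarrow> real) \<Rightarrow> complex \<Rightarrow> real" where
  "pdy u z = deriv (\<lambda>t::real. u (z + \<i> * complex_of_real t)) 0"

definition has_partials :: "(complex \<Rightarrow> real) \<Rightarrow> bool" where
  "has_partials u \<longleftrightarrow>
     (\<forall>z. (\<lambda>t::real. u (z + complex_of_real t)) differentiable (at 0)
        \<and> (\<lambda>t::real. u (z + \<i> * complex_of_real t)) differentiable (at 0))"

definition harmonic :: "(complex \<Rightarrow> real) \<Rightarrow> bool" where
  "harmonic u \<longleftrightarrow>
     continuous_on UNIV u \<and>
     has_partials u \<and> has_partials (pdx u) \<and> has_partials (pdy u) \<and>
     continuous_on UNIV (pdx u) \<and> continuous_on UNIV (pdy u) \<and>
     continuous_on UNIV (pdx (pdx u)) \<and> continuous_on UNIV (pdy (pdx u)) \<and>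
     continuous_on UNIV (pdx (pdy u)) \<and> continuous_on UNIV (pdy (pdy u)) \<and>
     (\<forall>z. pdx (pdx u) z + pdy (pdy u) z = 0)"

definition asym_dirs :: "complex set \<Rightarrow> complex set" where
  "asym_dirs R = {w. norm w = 1 \<and>
     (\<exists>(ws::nat \<Rightarrow> complex) (eps::nat \<Rightarrow> real).
        (\<forall>n. ws n \<in> R \<and> eps n > 0) \<and> eps \<longlonglongrightarrow> 0 \<and>
        (\<lambda>n. complex_of_real (eps n) * ws n) \<longlonglongrightarrow> w)}"

end

theory Submission
  imports Defs "HOL-Complex_Analysis.Complex_Analysis"
begin


lemma asym_char:
  "w \<in> asym_dirs R \<longleftrightarrow> norm w = 1 \<and>
     (\<forall>d>0. \<exists>r\<in>R. \<exists>e. 0 < e \<and> e < d \<and> dist (complex_of_real e * r) w < d)"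
proof
  assume "w \<in> asym_dirs R"
  then obtain ws eps where w1: "norm w = 1" and h: "\<forall>n. ws n \<in> R \<and> eps n > 0"
    and e0: "eps \<longlonglongrightarrow> 0" and l: "(\<lambda>n. complex_of_real (eps n) * ws n) \<longlonglongrightarrow> w"
    unfolding asym_dirs_def by blast
  show "norm w = 1 \<and> (\<forall>d>0. \<exists>r\<in>R. \<exists>e. 0 < e \<and> e < d \<and> dist (complex_of_real e * r) w < d)"
  proof (intro conjI allI impI)
    fix d :: real assume d: "d > 0"
    have "eventually (\<lambda>n. eps n < d) sequentially" using order_tendstoD(2)[OF e0 d] .
    moreover have "eventually (\<lambda>n. dist (complex_of_real (eps n) * ws n) w < d) sequentially"
      using tendstoD[OF l d] .
    ultimately have "eventually (\<lambda>n. eps n < d \<and> dist (complex_of_real (eps n) * ws n) w < d) sequentially"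
      by (rule eventually_conj)
    then obtain n where "eps n < d \<and> dist (complex_of_real (eps n) * ws n) w < d"
      using eventually_sequentially by auto
    then show "\<exists>r\<in>R. \<exists>e. 0 < e \<and> e < d \<and> dist (complex_of_real e * r) w < d"
      using h by blast
  qed (rule w1)
next
  assume a: "norm w = 1 \<and> (\<forall>d>0. \<exists>r\<in>R. \<exists>e. 0 < e \<and> e < d \<and> dist (complex_of_real e * r) w < d)"
  have "\<forall>n. \<exists>r e. r \<in> R \<and> 0 < e \<and> e < inverse (real (Suc n)) \<and>
        dist (complex_of_real e * r) w < inverse (real (Suc n))"
    using a by (metis inverse_positive_iff_positive of_nat_0_less_iff zero_less_Suc)
  then obtain ws eps where h: "\<And>n. ws n \<in> R \<and> 0 < eps n \<and> eps n < inverse (real (Suc n)) \<and>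
        dist (complex_of_real (eps n) * ws n) w < inverse (real (Suc n))"
    by metis
  have e0: "eps \<longlonglongrightarrow> 0"
    by (rule tendsto_sandwich[OF _ _ tendsto_const LIMSEQ_inverse_real_of_nat])
       (use h in \<open>auto intro!: always_eventually intro: less_imp_le\<close>)
  have "(\<lambda>n. dist (complex_of_real (eps n) * ws n) w) \<longlonglongrightarrow> 0"
    by (rule tendsto_sandwich[OF _ _ tendsto_const LIMSEQ_inverse_real_of_nat])
       (use h in \<open>auto intro!: always_eventually intro: less_imp_le\<close>)
  then have "(\<lambda>n. complex_of_real (eps n) * ws n) \<longlonglongrightarrow> w"
    using tendsto_dist_iff by blast
  then show "w \<in> asym_dirs R" unfolding asym_dirs_def using a h e0 by blast
qed

lemma asym_closed: "closed (asym_dirs R)"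
  unfolding closed_sequential_limits
proof (intro allI impI, elim conjE)
  fix x l assume xs: "\<forall>n. x n \<in> asym_dirs R" and xl: "x \<longlonglongrightarrow> l"
  have n1: "norm l = 1"
  proof -
    have "(\<lambda>n. norm (x n)) \<longlonglongrightarrow> norm l" using tendsto_norm[OF xl] .
    moreover have "(\<lambda>n. norm (x n)) = (\<lambda>n. 1)" using xs asym_char by blast
    ultimately show ?thesis using LIMSEQ_unique tendsto_const by metis
  qed
  show "l \<in> asym_dirs R"
    unfolding asym_char
  proof (intro conjI allI impI n1)
    fix d :: real assume d: "d > 0"
    then have "d/2 > 0" by simp
    from tendstoD[OF xl this] obtain n where n: "dist (x n) l < d/2"
      using eventually_sequentially by auto
    from xs have "\<exists>r\<in>R. \<exists>e. 0 < e \<and> e < d/2 \<and> dist (complex_of_real e * r) (x n) < d/2"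
      using asym_char \<open>d/2 > 0\<close> by blast
    then obtain r e where "r \<in> R" "0 < e" "e < d/2" "dist (complex_of_real e * r) (x n) < d/2"
      by blast
    moreover have "dist (complex_of_real e * r) l < d"
      using dist_triangle[of "complex_of_real e * r" l "x n"] \<open>dist (complex_of_real e * r) (x n) < d/2\<close> n by linarith
    ultimately show "\<exists>r\<in>R. \<exists>e. 0 < e \<and> e < d \<and> dist (complex_of_real e * r) l < d"
      by (intro bexI[of _ r] exI[of _ e]) auto
  qed
qed

lemma asym_sub: "asym_dirs R \<subseteq> sphere 0 1"
  unfolding asym_dirs_def by auto

lemma asym_nonempty:
  assumes "\<not> bounded R"
  shows "asym_dirs R \<noteq> {}"
proof -
  have "\<forall>n. \<exists>r\<in>R. norm r > real (Suc n)"
    using assms unfolding bounded_iff by (meson not_le)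
  then obtain r where r: "\<And>n. r n \<in> R \<and> norm (r n) > real (Suc n)" by metis
  define s where "s n = r n / complex_of_real (norm (r n))" for n
  have rn0: "r n \<noteq> 0" for n using r[of n] by (metis norm_zero not_less_zero of_nat_less_0_iff less_trans of_nat_0_less_iff zero_less_Suc norm_ge_zero leD)
  have sS: "s n \<in> sphere 0 1" for n
    using rn0 by (simp add: s_def norm_divide)
  obtain l \<sigma> where lS: "l \<in> sphere 0 1" and sm: "strict_mono \<sigma>" and lim: "(s \<circ> \<sigma>) \<longlonglongrightarrow> l"
    using compact_imp_seq_compact[OF compact_sphere, of 0 1] sS unfolding seq_compact_def by metis
  define eps where "eps n = 1 / norm (r (\<sigma> n))" for n
  have epos: "eps n > 0" for n using rn0 by (simp add: eps_def)
  have ele: "eps n \<le> inverse (real (Suc n))" for n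
  proof -
    have "real (Suc n) \<le> real (Suc (\<sigma> n))" using seq_suble[OF sm, of n] by simp
    also have "\<dots> < norm (r (\<sigma> n))" using r by blast
    finally show ?thesis unfolding eps_def by (simp add: divide_simps)
  qed
  have e0: "eps \<longlonglongrightarrow> 0"
    by (rule tendsto_sandwich[OF _ _ tendsto_const LIMSEQ_inverse_real_of_nat])
       (use epos ele in \<open>auto intro!: always_eventually intro: less_imp_le\<close>)
  have eq: "complex_of_real (eps n) * r (\<sigma> n) = (s \<circ> \<sigma>) n" for n
    by (simp add: eps_def s_def divide_inverse mult.commute)
  have "l \<in> asym_dirs R"
    unfolding asym_dirs_def
    using lS epos e0 r lim[unfolded o_def] eq by (auto intro!: exI[of _ "r \<circ> \<sigma>"] exI[of _ eps])
  then show ?thesis by blast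
qed



lemma line_deriv_x:
  assumes "has_partials u"
  shows "((\<lambda>t. u (w + complex_of_real t)) has_real_derivative pdx u (w + complex_of_real s)) (at s)"
proof -
  have "(\<lambda>t::real. u ((w + complex_of_real s) + complex_of_real t)) differentiable (at 0)"
    using assms unfolding has_partials_def by blast
  then have "((\<lambda>t::real. u ((w + complex_of_real s) + complex_of_real t)) has_real_derivative
      pdx u (w + complex_of_real s)) (at 0)"
    unfolding pdx_def using DERIV_deriv_iff_real_differentiable by blast
  moreover have "(\<lambda>t::real. u ((w + complex_of_real s) + complex_of_real t)) =
      (\<lambda>t. (\<lambda>t. u (w + complex_of_real t)) (t + s))"
    by (simp add: algebra_simps)
  ultimately show ?thesis using DERIV_shift[of "\<lambda>t. u (w + complex_of_real t)" _ 0 s] by simp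
qed

lemma line_deriv_y:
  assumes "has_partials u"
  shows "((\<lambda>t. u (w + \<i> * complex_of_real t)) has_real_derivative pdy u (w + \<i> * complex_of_real s)) (at s)"
proof -
  have "(\<lambda>t::real. u ((w + \<i> * complex_of_real s) + \<i> * complex_of_real t)) differentiable (at 0)"
    using assms unfolding has_partials_def by blast
  then have "((\<lambda>t::real. u ((w + \<i> * complex_of_real s) + \<i> * complex_of_real t)) has_real_derivative
      pdy u (w + \<i> * complex_of_real s)) (at 0)"
    unfolding pdy_def using DERIV_deriv_iff_real_differentiable by blast
  moreover have "(\<lambda>t::real. u ((w + \<i> * complex_of_real s) + \<i> * complex_of_real t)) =
      (\<lambda>t. (\<lambda>t. u (w + \<i> * complex_of_real t)) (t + s))"
    by (simp add: algebra_simps)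
  ultimately show ?thesis using DERIV_shift[of "\<lambda>t. u (w + \<i> * complex_of_real t)" _ 0 s] by simp
qed

lemma line_mvt:
  fixes g :: "real \<Rightarrow> real"
  assumes "\<And>t. (g has_real_derivative g' t) (at t)"
  shows "\<exists>t. \<bar>t\<bar> \<le> \<bar>a\<bar> \<and> g a - g 0 = a * g' t"
proof (cases a "0::real" rule: linorder_cases)
  case less
  from MVT2[OF less, of g g'] assms obtain t where "a < t" "t < 0" "g 0 - g a = (0 - a) * g' t" by blast
  then show ?thesis by (intro exI[of _ t]) (auto simp: algebra_simps)
next
  case equal then show ?thesis by auto
next
  case greater
  from MVT2[OF greater, of g g'] assms obtain t where "0 < t" "t < a" "g a - g 0 = (a - 0) * g' t" by blast
  then show ?thesis by (intro exI[of _ t]) auto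
qed

lemma norm_le_aux: "\<bar>t\<bar> \<le> \<bar>b\<bar> \<Longrightarrow> cmod (complex_of_real a + \<i> * complex_of_real t) \<le> cmod (complex_of_real a + \<i> * complex_of_real b)"
proof -
  assume "\<bar>t\<bar> \<le> \<bar>b\<bar>"
  then have "t^2 \<le> b^2" by (simp add: abs_le_square_iff)
  moreover have "\<And>x y. complex_of_real x + \<i> * complex_of_real y = Complex x y"
    by (simp add: complex_eq_iff)
  ultimately show ?thesis by (simp add: complex_norm)
qed

lemma frechet:
  assumes hp: "has_partials u" and cx: "continuous_on UNIV (pdx u)" and cy: "continuous_on UNIV (pdy u)"
  shows "(u has_derivative (\<lambda>h. pdx u z * Re h + pdy u z * Im h)) (at z)"
  unfolding has_derivative_at_alt
proof (intro conjI allI impI)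
  show "bounded_linear (\<lambda>h. pdx u z * Re h + pdy u z * Im h)"
    by (auto intro!: bounded_linear_add bounded_linear_compose[OF bounded_linear_mult_right]
        bounded_linear_Re bounded_linear_Im)
  fix e :: real assume e: "e > 0"
  then have e2: "e/2 > 0" by simp
  obtain d1 where d1: "d1 > 0" "\<And>x'. dist x' z < d1 \<Longrightarrow> dist (pdx u x') (pdx u z) < e/2"
    using cx e2 unfolding continuous_on_iff by blast
  obtain d2 where d2: "d2 > 0" "\<And>x'. dist x' z < d2 \<Longrightarrow> dist (pdy u x') (pdy u z) < e/2"
    using cy e2 unfolding continuous_on_iff by blast
  show "\<exists>d>0. \<forall>y. norm (y - z) < d \<longrightarrow>
          norm (u y - u z - (pdx u z * Re (y - z) + pdy u z * Im (y - z))) \<le> e * norm (y - z)"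
  proof (intro exI[of _ "min d1 d2"] conjI allI impI)
    show "min d1 d2 > 0" using d1 d2 by simp
    fix y assume y: "norm (y - z) < min d1 d2"
    define a where "a = Re (y - z)"
    define b where "b = Im (y - z)"
    have yab: "y = (z + complex_of_real a) + \<i> * complex_of_real b"
      by (simp add: a_def b_def complex_eq_iff)
    have nab: "norm (y - z) = cmod (complex_of_real a + \<i> * complex_of_real b)"
      by (simp add: yab)
    have aa: "\<bar>a\<bar> \<le> norm (y - z)" unfolding a_def by (rule abs_Re_le_cmod)
    have bb: "\<bar>b\<bar> \<le> norm (y - z)" unfolding b_def by (rule abs_Im_le_cmod)
    obtain t1 where t1: "\<bar>t1\<bar> \<le> \<bar>a\<bar>"
      "u (z + complex_of_real a) - u (z + complex_of_real 0) = a * pdx u (z + complex_of_real t1)"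
      using line_mvt[of "\<lambda>t. u (z + complex_of_real t)" "\<lambda>t. pdx u (z + complex_of_real t)" a]
        line_deriv_x[OF hp] by blast
    obtain t2 where t2: "\<bar>t2\<bar> \<le> \<bar>b\<bar>"
      "u ((z + complex_of_real a) + \<i> * complex_of_real b) - u ((z + complex_of_real a) + \<i> * complex_of_real 0)
        = b * pdy u ((z + complex_of_real a) + \<i> * complex_of_real t2)"
      using line_mvt[of "\<lambda>t. u ((z + complex_of_real a) + \<i> * complex_of_real t)"
          "\<lambda>t. pdy u ((z + complex_of_real a) + \<i> * complex_of_real t)" b]
        line_deriv_y[OF hp] by blast
    have "dist (z + complex_of_real t1) z < d1" using t1(1) aa y by (simp add: dist_norm)
    then have E1: "\<bar>pdx u (z + complex_of_real t1) - pdx u z\<bar> < e/2" using d1(2) by (simp add: dist_real_def)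
    have "dist ((z + complex_of_real a) + \<i> * complex_of_real t2) z \<le> norm (y - z)"
      using norm_le_aux[OF t2(1), of a] nab by (simp add: dist_norm)
    then have E2: "\<bar>pdy u ((z + complex_of_real a) + \<i> * complex_of_real t2) - pdy u z\<bar> < e/2"
      using d2(2) y by (simp add: dist_real_def)
    have "u y - u z - (pdx u z * Re (y - z) + pdy u z * Im (y - z)) =
        a * (pdx u (z + complex_of_real t1) - pdx u z) +
        b * (pdy u ((z + complex_of_real a) + \<i> * complex_of_real t2) - pdy u z)"
      using t1(2) t2(2) yab by (simp add: a_def[symmetric] b_def[symmetric] algebra_simps)
    also have "\<bar>\<dots>\<bar> \<le> \<bar>a\<bar> * \<bar>pdx u (z + complex_of_real t1) - pdx u z\<bar> +
        \<bar>b\<bar> * \<bar>pdy u ((z + complex_of_real a) + \<i> * complex_of_real t2) - pdy u z\<bar>"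
      by (metis abs_mult abs_triangle_ineq)
    also have "\<dots> \<le> \<bar>a\<bar> * (e/2) + \<bar>b\<bar> * (e/2)"
      by (intro add_mono mult_left_mono less_imp_le[OF E1] less_imp_le[OF E2] abs_ge_zero)
    also have "\<dots> \<le> norm (y - z) * (e/2) + norm (y - z) * (e/2)"
      using e by (intro add_mono mult_right_mono aa bb) auto
    also have "\<dots> = e * norm (y - z)" by simp
    finally show "norm (u y - u z - (pdx u z * Re (y - z) + pdy u z * Im (y - z))) \<le> e * norm (y - z)"
      by simp
  qed
qed

lemma clairaut:
  assumes hp: "has_partials u" and hx: "has_partials (pdx u)" and hy: "has_partials (pdy u)"
    and c1: "continuous_on UNIV (pdy (pdx u))" and c2: "continuous_on UNIV (pdx (pdy u))"
  shows "pdy (pdx u) z = pdx (pdy u) z"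
proof (rule ccontr)
  assume ne: "pdy (pdx u) z \<noteq> pdx (pdy u) z"
  define \<epsilon> where "\<epsilon> = \<bar>pdy (pdx u) z - pdx (pdy u) z\<bar> / 4"
  have ep: "\<epsilon> > 0" using ne by (simp add: \<epsilon>_def)
  obtain d1 where d1: "d1 > 0" "\<And>x'. dist x' z < d1 \<Longrightarrow> dist (pdy (pdx u) x') (pdy (pdx u) z) < \<epsilon>"
    using c1 ep unfolding continuous_on_iff by blast
  obtain d2 where d2: "d2 > 0" "\<And>x'. dist x' z < d2 \<Longrightarrow> dist (pdx (pdy u) x') (pdx (pdy u) z) < \<epsilon>"
    using c2 ep unfolding continuous_on_iff by blast
  define h where "h = min d1 d2 / 4"
  have hpos: "h > 0" using d1 d2 by (simp add: h_def)
  define \<phi> where "\<phi> s = u ((z + \<i> * complex_of_real h) + complex_of_real s) - u (z + complex_of_real s)" for s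
  have D\<phi>: "(\<phi> has_real_derivative (pdx u ((z + \<i> * complex_of_real h) + complex_of_real s) - pdx u (z + complex_of_real s))) (at s)" for s
    unfolding \<phi>_def by (intro DERIV_diff line_deriv_x[OF hp])
  obtain s1 where s1: "\<bar>s1\<bar> \<le> \<bar>h\<bar>"
    "\<phi> h - \<phi> 0 = h * (pdx u ((z + \<i> * complex_of_real h) + complex_of_real s1) - pdx u (z + complex_of_real s1))"
    using line_mvt[OF D\<phi>, of h] by blast
  define \<psi> where "\<psi> t = pdx u ((z + complex_of_real s1) + \<i> * complex_of_real t)" for t
  obtain t1 where t1: "\<bar>t1\<bar> \<le> \<bar>h\<bar>"
    "\<psi> h - \<psi> 0 = h * pdy (pdx u) ((z + complex_of_real s1) + \<i> * complex_of_real t1)"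
    using line_mvt[of \<psi> "\<lambda>t. pdy (pdx u) ((z + complex_of_real s1) + \<i> * complex_of_real t)" h]
      line_deriv_y[OF hx] unfolding \<psi>_def by blast
  have "\<psi> h - \<psi> 0 = pdx u ((z + \<i> * complex_of_real h) + complex_of_real s1) - pdx u (z + complex_of_real s1)"
    unfolding \<psi>_def by (simp add: algebra_simps)
  then have \<Delta>1: "\<phi> h - \<phi> 0 = h * h * pdy (pdx u) ((z + complex_of_real s1) + \<i> * complex_of_real t1)"
    using s1(2) t1(2) by simp
  define \<kappa> where "\<kappa> t = u ((z + complex_of_real h) + \<i> * complex_of_real t) - u (z + \<i> * complex_of_real t)" for t
  have D\<kappa>: "(\<kappa> has_real_derivative (pdy u ((z + complex_of_real h) + \<i> * complex_of_real t) - pdy u (z + \<i> * complex_of_real t))) (at t)" for t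
    unfolding \<kappa>_def by (intro DERIV_diff line_deriv_y[OF hp])
  obtain t2 where t2: "\<bar>t2\<bar> \<le> \<bar>h\<bar>"
    "\<kappa> h - \<kappa> 0 = h * (pdy u ((z + complex_of_real h) + \<i> * complex_of_real t2) - pdy u (z + \<i> * complex_of_real t2))"
    using line_mvt[OF D\<kappa>, of h] by blast
  define \<rho> where "\<rho> s = pdy u ((z + \<i> * complex_of_real t2) + complex_of_real s)" for s
  obtain s2 where s2: "\<bar>s2\<bar> \<le> \<bar>h\<bar>"
    "\<rho> h - \<rho> 0 = h * pdx (pdy u) ((z + \<i> * complex_of_real t2) + complex_of_real s2)"
    using line_mvt[of \<rho> "\<lambda>s. pdx (pdy u) ((z + \<i> * complex_of_real t2) + complex_of_real s)" h]
      line_deriv_x[OF hy] unfolding \<rho>_def by blast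
  have "\<rho> h - \<rho> 0 = pdy u ((z + complex_of_real h) + \<i> * complex_of_real t2) - pdy u (z + \<i> * complex_of_real t2)"
    unfolding \<rho>_def by (simp add: algebra_simps)
  then have \<Delta>2: "\<kappa> h - \<kappa> 0 = h * h * pdx (pdy u) ((z + \<i> * complex_of_real t2) + complex_of_real s2)"
    using s2(2) t2(2) by simp
  have "\<phi> h - \<phi> 0 = \<kappa> h - \<kappa> 0"
    unfolding \<phi>_def \<kappa>_def by (simp add: algebra_simps)
  then have eqv: "pdy (pdx u) ((z + complex_of_real s1) + \<i> * complex_of_real t1) =
      pdx (pdy u) ((z + \<i> * complex_of_real t2) + complex_of_real s2)"
    using \<Delta>1 \<Delta>2 hpos by simp
  have "dist ((z + complex_of_real s1) + \<i> * complex_of_real t1) z \<le> \<bar>s1\<bar> + \<bar>t1\<bar>"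
    using norm_triangle_ineq[of "complex_of_real s1" "\<i> * complex_of_real t1"]
    by (simp add: dist_norm norm_mult)
  also have "\<dots> < d1" using s1(1) t1(1) hpos d1 d2 unfolding h_def by linarith
  finally have E1: "\<bar>pdy (pdx u) ((z + complex_of_real s1) + \<i> * complex_of_real t1) - pdy (pdx u) z\<bar> < \<epsilon>"
    using d1(2) by (simp add: dist_real_def)
  have "dist ((z + \<i> * complex_of_real t2) + complex_of_real s2) z \<le> \<bar>t2\<bar> + \<bar>s2\<bar>"
    using norm_triangle_ineq[of "\<i> * complex_of_real t2" "complex_of_real s2"]
    by (simp add: dist_norm norm_mult)
  also have "\<dots> < d2" using s2(1) t2(1) hpos d1 d2 unfolding h_def by linarith
  finally have E2: "\<bar>pdx (pdy u) ((z + \<i> * complex_of_real t2) + complex_of_real s2) - pdx (pdy u) z\<bar> < \<epsilon>"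
    using d2(2) by (simp add: dist_real_def)
  have "\<bar>pdy (pdx u) z - pdx (pdy u) z\<bar> < 2 * \<epsilon>" using E1 E2 eqv by linarith
  then show False using ep unfolding \<epsilon>_def by (auto simp: field_simps)
qed


lemma holo:
  assumes hu: "harmonic u"
  shows "((\<lambda>z. complex_of_real (pdx u z) - \<i> * complex_of_real (pdy u z)) has_field_derivative
     (complex_of_real (pdx (pdx u) z) - \<i> * complex_of_real (pdy (pdx u) z))) (at z)"
proof -
  note H = hu[unfolded harmonic_def]
  have dP: "(pdx u has_derivative (\<lambda>h. pdx (pdx u) z * Re h + pdy (pdx u) z * Im h)) (at z)"
    by (rule frechet) (use H in auto)
  have dQ: "(pdy u has_derivative (\<lambda>h. pdx (pdy u) z * Re h + pdy (pdy u) z * Im h)) (at z)"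
    by (rule frechet) (use H in auto)
  have cl: "pdy (pdx u) z = pdx (pdy u) z" by (rule clairaut) (use H in auto)
  have lap: "pdy (pdy u) z = - pdx (pdx u) z" using H by (metis add.commute eq_neg_iff_add_eq_0)
  have d: "((\<lambda>z. complex_of_real (pdx u z) - \<i> * complex_of_real (pdy u z)) has_derivative
     (\<lambda>h. complex_of_real (pdx (pdx u) z * Re h + pdy (pdx u) z * Im h) -
          \<i> * complex_of_real (pdx (pdy u) z * Re h + pdy (pdy u) z * Im h))) (at z)"
    by (intro has_derivative_diff bounded_linear.has_derivative[OF bounded_linear_of_real] dP
         bounded_linear.has_derivative[OF bounded_linear_mult_right] dQ)
  have eq: "(\<lambda>h. complex_of_real (pdx (pdx u) z * Re h + pdy (pdx u) z * Im h) -
          \<i> * complex_of_real (pdx (pdy u) z * Re h + pdy (pdy u) z * Im h)) =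
      (*) (complex_of_real (pdx (pdx u) z) - \<i> * complex_of_real (pdy (pdx u) z))"
    by (rule ext) (simp add: complex_eq_iff cl lap algebra_simps)
  show ?thesis using d unfolding eq has_field_derivative_def .
qed


lemma const_zero_partials:
  fixes g :: "complex \<Rightarrow> real"
  assumes hx: "\<And>z. ((\<lambda>s. g (z + complex_of_real s)) has_real_derivative 0) (at 0)"
    and hy: "\<And>z. ((\<lambda>s. g (z + \<i> * complex_of_real s)) has_real_derivative 0) (at 0)"
  shows "g z = g 0"
proof -
  have dX: "\<forall>t. ((\<lambda>s. g (w + complex_of_real s)) has_real_derivative 0) (at t)" for w
  proof (intro allI)
    fix t
    have "((\<lambda>s. g ((w + complex_of_real t) + complex_of_real s)) has_real_derivative 0) (at 0)" by (rule hx)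
    moreover have "(\<lambda>s. g ((w + complex_of_real t) + complex_of_real s)) = (\<lambda>s. (\<lambda>s. g (w + complex_of_real s)) (s + t))"
      by (simp add: algebra_simps)
    ultimately show "((\<lambda>s. g (w + complex_of_real s)) has_real_derivative 0) (at t)"
      using DERIV_shift[of "\<lambda>s. g (w + complex_of_real s)" 0 0 t] by simp
  qed
  have X: "g (w + complex_of_real x) = g (w + complex_of_real y)" for w x y
    using DERIV_isconst_all[OF dX[of w], of x y] by simp
  have dY: "\<forall>t. ((\<lambda>s. g (w + \<i> * complex_of_real s)) has_real_derivative 0) (at t)" for w
  proof (intro allI)
    fix t
    have "((\<lambda>s. g ((w + \<i> * complex_of_real t) + \<i> * complex_of_real s)) has_real_derivative 0) (at 0)" by (rule hy)
    moreover have "(\<lambda>s. g ((w + \<i> * complex_of_real t) + \<i> * complex_of_real s)) = (\<lambda>s. (\<lambda>s. g (w + \<i> * complex_of_real s)) (s + t))"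
      by (simp add: algebra_simps)
    ultimately show "((\<lambda>s. g (w + \<i> * complex_of_real s)) has_real_derivative 0) (at t)"
      using DERIV_shift[of "\<lambda>s. g (w + \<i> * complex_of_real s)" 0 0 t] by simp
  qed
  have Y: "g (w + \<i> * complex_of_real x) = g (w + \<i> * complex_of_real y)" for w x y
    using DERIV_isconst_all[OF dY[of w], of x y] by simp
  have ez: "complex_of_real (Re z) + \<i> * complex_of_real (Im z) = z"
    by (simp add: complex_eq_iff)
  have "g z = g (complex_of_real (Re z) + \<i> * complex_of_real (Im z))"
    by (simp only: ez)
  also have "\<dots> = g (complex_of_real (Re z) + \<i> * complex_of_real 0)"
    using Y[of "complex_of_real (Re z)" "Im z" 0] by simp
  also have "\<dots> = g (0 + complex_of_real (Re z))" by simp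
  also have "\<dots> = g (0 + complex_of_real 0)" using X[of 0 "Re z" 0] by simp
  finally show ?thesis by simp
qed

lemma line_chain:
  assumes "(G has_field_derivative D) (at z)"
  shows "((\<lambda>s. Re (G (z + c * complex_of_real s))) has_real_derivative Re (D * c)) (at 0)"
proof -
  have f: "((\<lambda>s::real. z + c * complex_of_real s) has_derivative (\<lambda>s. c * complex_of_real s)) (at 0)"
    by (auto intro!: derivative_eq_intros)
  have g: "(G has_derivative (*) D) (at ((\<lambda>s::real. z + c * complex_of_real s) 0))"
    using assms unfolding has_field_derivative_def by simp
  have "((\<lambda>s. Re ((G \<circ> (\<lambda>s::real. z + c * complex_of_real s)) s)) has_derivative
        (\<lambda>s. Re ((((*) D) \<circ> (\<lambda>s. c * complex_of_real s)) s))) (at 0)"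
    by (rule bounded_linear.has_derivative[OF bounded_linear_Re diff_chain_at[OF f g]])
  moreover have "(\<lambda>s. Re ((((*) D) \<circ> (\<lambda>s. c * complex_of_real s)) s)) = (*) (Re (D * c))"
    by (rule ext) (simp add: algebra_simps)
  ultimately show ?thesis unfolding has_field_derivative_def by (simp add: o_def)
qed

lemma harmonic_bounded_const:
  assumes hu: "harmonic u" and bu: "bounded (range u)"
  shows "u z = u 0"
proof -
  note H = hu[unfolded harmonic_def]
  have hp: "has_partials u" using H by blast
  define h where "h z = complex_of_real (pdx u z) - \<i> * complex_of_real (pdy u z)" for z
  have dh: "(h has_field_derivative (complex_of_real (pdx (pdx u) z) - \<i> * complex_of_real (pdy (pdx u) z))) (at z)" for z
    unfolding h_def by (rule holo[OF hu])
  have hol: "h holomorphic_on UNIV"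
    unfolding holomorphic_on_def field_differentiable_def using dh by (blast intro: has_field_derivative_at_within)
  obtain G where G: "\<And>x. (G has_field_derivative h x) (at x)"
    using holomorphic_convex_primitive'[OF convex_UNIV open_UNIV hol] by auto
  have "(\<lambda>z. Re (G z) - u z) w = (\<lambda>z. Re (G z) - u z) 0" for w
  proof (rule const_zero_partials)
    fix z
    have a: "((\<lambda>s. Re (G (z + 1 * complex_of_real s))) has_real_derivative Re (h z * 1)) (at 0)"
      by (rule line_chain[OF G])
    have b: "((\<lambda>s. u (z + complex_of_real s)) has_real_derivative pdx u (z + complex_of_real 0)) (at 0)"
      by (rule line_deriv_x[OF hp])
    show "((\<lambda>s. Re (G (z + complex_of_real s)) - u (z + complex_of_real s)) has_real_derivative 0) (at 0)"
      using DERIV_diff[OF a b] by (simp add: h_def)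
  next
    fix z
    have a: "((\<lambda>s. Re (G (z + \<i> * complex_of_real s))) has_real_derivative Re (h z * \<i>)) (at 0)"
      by (rule line_chain[OF G])
    have b: "((\<lambda>s. u (z + \<i> * complex_of_real s)) has_real_derivative pdy u (z + \<i> * complex_of_real 0)) (at 0)"
      by (rule line_deriv_y[OF hp])
    show "((\<lambda>s. Re (G (z + \<i> * complex_of_real s)) - u (z + \<i> * complex_of_real s)) has_real_derivative 0) (at 0)"
      using DERIV_diff[OF a b] by (simp add: h_def)
  qed
  then have WU: "Re (G z) = u z + (Re (G 0) - u 0)" for z by (metis add_diff_cancel_left' diff_add_cancel)
  obtain B where B: "\<And>z. \<bar>u z\<bar> \<le> B" using bu unfolding bounded_iff by auto
  have dE: "((\<lambda>z. exp (G z)) has_field_derivative exp (G z) * h z) (at z)" for z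
    by (rule DERIV_chain2[OF DERIV_exp G])
  have holE: "(\<lambda>z. exp (G z)) holomorphic_on UNIV"
    unfolding holomorphic_on_def field_differentiable_def using dE by (blast intro: has_field_derivative_at_within)
  have "bounded (range (\<lambda>z. exp (G z)))"
    unfolding bounded_iff
  proof (intro exI[of _ "exp (B + (Re (G 0) - u 0))"] ballI)
    fix x assume "x \<in> range (\<lambda>z. exp (G z))"
    then obtain z where "x = exp (G z)" by blast
    then show "norm x \<le> exp (B + (Re (G 0) - u 0))"
      using B[of z] WU[of z] by simp
  qed
  with Liouville_theorem[OF holE] obtain k where k: "\<And>z. exp (G z) = k"
    unfolding constant_on_def by blast
  have h0: "h z = 0" for z
  proof -
    have "((\<lambda>z. exp (G z)) has_field_derivative 0) (at z)" unfolding k by simp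
    with dE[of z] have "exp (G z) * h z = 0" using DERIV_unique by blast
    then show ?thesis by simp
  qed
  have P0: "pdx u z = 0" and Q0: "pdy u z = 0" for z
    using h0[of z] by (simp_all add: h_def complex_eq_iff)
  show ?thesis
  proof (rule const_zero_partials)
    fix z show "((\<lambda>s. u (z + complex_of_real s)) has_real_derivative 0) (at 0)"
      using line_deriv_x[OF hp, of z 0] P0 by simp
  next
    fix z show "((\<lambda>s. u (z + \<i> * complex_of_real s)) has_real_derivative 0) (at 0)"
      using line_deriv_y[OF hp, of z 0] Q0 by simp
  qed
qed


theorem corollary2:
  fixes u v :: "complex \<Rightarrow> real"
  assumes "harmonic u" and "harmonic v"
    and "\<not> (\<exists>c. \<forall>z. complex_of_real (u z) + \<i> * complex_of_real (v z) = c)"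
  shows "asym_dirs (range (\<lambda>z. complex_of_real (u z) + \<i> * complex_of_real (v z))) \<noteq> {}
    \<and> closed (asym_dirs (range (\<lambda>z. complex_of_real (u z) + \<i> * complex_of_real (v z))))
    \<and> asym_dirs (range (\<lambda>z. complex_of_real (u z) + \<i> * complex_of_real (v z))) \<subseteq> sphere 0 1"
proof (intro conjI asym_closed asym_sub asym_nonempty notI)
  assume bd: "bounded (range (\<lambda>z. complex_of_real (u z) + \<i> * complex_of_real (v z)))"
  then obtain B where B: "\<And>z. norm (complex_of_real (u z) + \<i> * complex_of_real (v z)) \<le> B"
    unfolding bounded_iff by auto
  have "bounded (range u)" unfolding bounded_iff
  proof (intro exI[of _ B] ballI)
    fix x assume "x \<in> range u"
    then obtain z where "x = u z" by blast
    then show "norm x \<le> B"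
      using abs_Re_le_cmod[of "complex_of_real (u z) + \<i> * complex_of_real (v z)"] B[of z] by simp
  qed
  then have U: "u z = u 0" for z using harmonic_bounded_const[OF assms(1)] by blast
  have "bounded (range v)" unfolding bounded_iff
  proof (intro exI[of _ B] ballI)
    fix x assume "x \<in> range v"
    then obtain z where "x = v z" by blast
    then show "norm x \<le> B"
      using abs_Im_le_cmod[of "complex_of_real (u z) + \<i> * complex_of_real (v z)"] B[of z] by simp
  qed
  then have V: "v z = v 0" for z using harmonic_bounded_const[OF assms(2)] by blast
  show False using assms(3) U V by metis
qed

end
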